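(* Let $N\ge 3$, write $N=2g+1$ or $N=2g+2$ with $g\ge 1$, and let $(v_n(x))_{n\in\mathbf Z}$ be a solution of the $N$-periodic dressing chain (see context). Let $T(\lambda)=\begin{pmatrix}A(\lambda)&B(\lambda)\\ C(\lambda)&D(\lambda)\end{pmatrix}$ be its transition matrix, $P(\lambda)=\operatorname{Tr}T(\lambda)$, $Q(\lambda)=\det T(\lambda)$. Suppose that, at the values of $x$ considered, the $g$ zeros $\lambda_1,\dots,\lambda_g$ of $B(\lambda)$ are pairwise distinct (and depend differentiably on $x$), and put $z_j=A(\lambda_j)$, assumed nonzero. Then for $j=1,\dots,g$, $$\dot\lambda_j=\frac{z_j-Q(\lambda_j)z_j^{-1}}{B'(\lambda_j)},\qquad \dot z_j=\frac{P'(\lambda_j)z_j-Q'(\lambda_j)}{B'(\lambda_j)},$$ where the dot denotes $d/dx$ and the prime denotes $\partial/\partial\lambda$.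
   Context: Fix constants $\alpha_1,\dots,\alpha_N$, extended $N$-periodically ($\alpha_{n+N}=\alpha_n$); put $\alpha=\sum_{n=1}^N\alpha_n$, $\beta_n=\alpha_1+\cdots+\alpha_n$, $\beta_0=0$. A solution of the $N$-periodic dressing chain is a family of functions $v_n(x)$, $n\in\mathbf Z$, with $v_{n+N}=v_n$ and $\dot v_n+\dot v_{n+1}=v_{n+1}^2-v_n^2+\alpha_n$ for all $n$. Put $v=v_1+\cdots+v_N$ (then $\dot v=\alpha/2$). Let $V_n(\lambda)=\begin{pmatrix}v_n&1\\ \lambda+v_n^2&v_n\end{pmatrix}$ and define the transition matrix $T(\lambda)=V_N(\lambda+\beta_{N-1})\cdots V_2(\lambda+\beta_1)V_1(\lambda)$. Then $Q(\lambda)=\det T(\lambda)=(-1)^N\lambda\prod_{n=1}^{N-1}(\lambda+\beta_n)$, and $B(\lambda)$ is a polynomial of degree $g$ with leading coefficient $b_0=1$ if $N=2g+1$ and $b_0=v$ if $N=2g+2$. *)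

theory Defs
  imports "HOL-Analysis.Analysis"
begin

definition mat2 :: "complex \<Rightarrow> complex \<Rightarrow> complex \<Rightarrow> complex \<Rightarrow> complex^2^2" where
  "mat2 a b c d = (\<chi> i j. if i = 1 then (if j = 1 then a else b) else (if j = 1 then c else d))"

definition dbeta :: "(nat \<Rightarrow> complex) \<Rightarrow> nat \<Rightarrow> complex" where
  "dbeta \<alpha> n = (\<Sum>k=1..n. \<alpha> k)"

definition Vmat :: "(nat \<Rightarrow> real \<Rightarrow> complex) \<Rightarrow> nat \<Rightarrow> complex \<Rightarrow> real \<Rightarrow> complex^2^2" where
  "Vmat v n lam x = mat2 (v n x) 1 (lam + (v n x)^2) (v n x)"

fun Tpart :: "(nat \<Rightarrow> complex) \<Rightarrow> (nat \<Rightarrow> real \<Rightarrow> complex) \<Rightarrow> nat \<Rightarrow> complex \<Rightarrow> real \<Rightarrow> complex^2^2" where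
  "Tpart \<alpha> v 0 lam x = mat 1"
| "Tpart \<alpha> v (Suc k) lam x = Vmat v (Suc k) (lam + dbeta \<alpha> k) x ** Tpart \<alpha> v k lam x"

definition Tmat :: "(nat \<Rightarrow> complex) \<Rightarrow> (nat \<Rightarrow> real \<Rightarrow> complex) \<Rightarrow> nat \<Rightarrow> complex \<Rightarrow> real \<Rightarrow> complex^2^2" where
  "Tmat \<alpha> v N lam x = Tpart \<alpha> v N lam x"

definition Aent where "Aent \<alpha> v N lam x = Tmat \<alpha> v N lam x $ 1 $ 1"
definition Bent where "Bent \<alpha> v N lam x = Tmat \<alpha> v N lam x $ 1 $ 2"
definition Cent where "Cent \<alpha> v N lam x = Tmat \<alpha> v N lam x $ 2 $ 1"
definition Dent where "Dent \<alpha> v N lam x = Tmat \<alpha> v N lam x $ 2 $ 2"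

definition Ptr where "Ptr \<alpha> v N lam x = Aent \<alpha> v N lam x + Dent \<alpha> v N lam x"
definition Qdet where "Qdet \<alpha> v N lam x = det (Tmat \<alpha> v N lam x)"

definition dressing_chain :: "nat \<Rightarrow> (nat \<Rightarrow> complex) \<Rightarrow> (nat \<Rightarrow> real \<Rightarrow> complex) \<Rightarrow> bool" where
  "dressing_chain N \<alpha> v \<longleftrightarrow>
     (\<forall>n. \<alpha> (n + N) = \<alpha> n) \<and> (\<forall>n x. v (n + N) x = v n x) \<and>
     (\<forall>n x. v n differentiable (at x)) \<and>
     (\<forall>n x. vector_derivative (v n) (at x) + vector_derivative (v (Suc n)) (at x)
            = (v (Suc n) x)^2 - (v n x)^2 + \<alpha> n)"

end

theory Submission
  imports Defs "HOL-Computational_Algebra.Polynomial"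
begin


lemma mat2_nth: "mat2 a b c d $ 1 $ 1 = a" "mat2 a b c d $ 1 $ 2 = b"
  "mat2 a b c d $ 2 $ 1 = c" "mat2 a b c d $ 2 $ 2 = d"
  by (simp_all add: mat2_def)

lemma mat2_mult: "mat2 a b c d ** mat2 a' b' c' d' =
   mat2 (a*a' + b*c') (a*b' + b*d') (c*a' + d*c') (c*b' + d*d')"
  unfolding matrix_matrix_mult_def
  by (simp add: vec_eq_iff sum_2 mat2_def forall_2)

lemma mat1_2: "(mat 1 :: complex^2^2) = mat2 1 0 0 1"
  by (simp add: vec_eq_iff mat_def mat2_def forall_2)

fun PT :: "(nat \<Rightarrow> complex) \<Rightarrow> (nat \<Rightarrow> real \<Rightarrow> complex) \<Rightarrow> nat \<Rightarrow> real
   \<Rightarrow> complex poly \<times> complex poly \<times> complex poly \<times> complex poly" where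
  "PT al v 0 x = (1, 0, 0, 1)"
| "PT al v (Suc k) x = (case PT al v k x of (a, b, c, d) \<Rightarrow>
     (smult (v (Suc k) x) a + c, smult (v (Suc k) x) b + d,
      [:dbeta al k + (v (Suc k) x)^2, 1:] * a + smult (v (Suc k) x) c,
      [:dbeta al k + (v (Suc k) x)^2, 1:] * b + smult (v (Suc k) x) d))"

definition "pa al v k x = fst (PT al v k x)"
definition "pb al v k x = fst (snd (PT al v k x))"
definition "pc al v k x = fst (snd (snd (PT al v k x)))"
definition "pd al v k x = snd (snd (snd (PT al v k x)))"

lemma p0: "pa al v 0 x = 1" "pb al v 0 x = 0" "pc al v 0 x = 0" "pd al v 0 x = 1"
  by (simp_all add: pa_def pb_def pc_def pd_def)

lemma pS:
  "pa al v (Suc k) x = smult (v (Suc k) x) (pa al v k x) + pc al v k x"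
  "pb al v (Suc k) x = smult (v (Suc k) x) (pb al v k x) + pd al v k x"
  "pc al v (Suc k) x = [:dbeta al k + (v (Suc k) x)^2, 1:] * pa al v k x + smult (v (Suc k) x) (pc al v k x)"
  "pd al v (Suc k) x = [:dbeta al k + (v (Suc k) x)^2, 1:] * pb al v k x + smult (v (Suc k) x) (pd al v k x)"
  by (simp_all add: pa_def pb_def pc_def pd_def split: prod.splits)

lemma Tpart_poly: "Tpart al v k l x = mat2 (poly (pa al v k x) l) (poly (pb al v k x) l)
   (poly (pc al v k x) l) (poly (pd al v k x) l)"
proof (induction k)
  case 0 then show ?case by (simp add: p0 mat1_2)
next
  case (Suc k) then show ?case
    by (simp add: pS Vmat_def mat2_mult algebra_simps)
qed



lemma deg_bounds:
  "degree (pa al v k x) \<le> k div 2 \<and> degree (pb al v k x) \<le> (k - 1) div 2 \<and>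
   degree (pc al v k x) \<le> (k + 1) div 2 \<and> degree (pd al v k x) \<le> k div 2 \<and>
   (k = 0 \<longrightarrow> pb al v k x = 0)"
proof (induction k)
  case 0 then show ?case by (simp add: p0)
next
  case (Suc k)
  let ?m = "[:dbeta al k + (v (Suc k) x)^2, 1:]"
  let ?w = "v (Suc k) x"
  have dm: "degree ?m \<le> 1" by simp
  from Suc.IH have a: "degree (pa al v k x) \<le> k div 2" and b: "degree (pb al v k x) \<le> (k - 1) div 2"
   and c: "degree (pc al v k x) \<le> (k + 1) div 2" and d: "degree (pd al v k x) \<le> k div 2"
   and b0: "k = 0 \<longrightarrow> pb al v k x = 0" by auto
  have A: "degree (pa al v (Suc k) x) \<le> Suc k div 2"
  proof -
    have "degree (smult ?w (pa al v k x)) \<le> Suc k div 2"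
      using a degree_smult_le[of ?w "pa al v k x"] by simp
    moreover have "degree (pc al v k x) \<le> Suc k div 2" using c by simp
    ultimately show ?thesis unfolding pS by (intro degree_add_le) auto
  qed
  have B: "degree (pb al v (Suc k) x) \<le> (Suc k - 1) div 2"
  proof -
    have "(k - 1) div 2 \<le> k div 2" by (simp add: div_le_mono)
    then have "degree (smult ?w (pb al v k x)) \<le> k div 2"
      using b degree_smult_le[of ?w "pb al v k x"] by linarith
    then show ?thesis unfolding pS using d by (intro degree_add_le) auto
  qed
  have C: "degree (pc al v (Suc k) x) \<le> (Suc k + 1) div 2"
  proof -
    have "degree (?m * pa al v k x) \<le> 1 + k div 2"
      using a dm degree_mult_le[of ?m "pa al v k x"] by linarith
    moreover have "degree (smult ?w (pc al v k x)) \<le> (k+1) div 2"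
      using c degree_smult_le[of ?w "pc al v k x"] by linarith
    ultimately show ?thesis unfolding pS by (intro degree_add_le) auto
  qed
  have D: "degree (pd al v (Suc k) x) \<le> Suc k div 2"
  proof -
    have "degree (?m * pb al v k x) \<le> Suc k div 2"
    proof (cases k)
      case 0 then show ?thesis using b0 by simp
    next
      case (Suc k')
      have "degree (?m * pb al v k x) \<le> 1 + (k - 1) div 2"
        using b dm degree_mult_le[of ?m "pb al v k x"] by linarith
      then show ?thesis using Suc by simp
    qed
    moreover have "degree (smult ?w (pd al v k x)) \<le> Suc k div 2"
      using d degree_smult_le[of ?w "pd al v k x"] by (simp add: le_trans div_le_mono)
    ultimately show ?thesis unfolding pS by (intro degree_add_le) auto
  qed
  show ?case using A B C D by simp
qed


definition "vd v n x = vector_derivative (v n) (at x)"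
definition "W v n mu x = mu + (v n x)^2 - vd v n x"

lemma dbeta_Suc: "dbeta al (Suc k) = dbeta al k + al (Suc k)"
  by (simp add: dbeta_def)
lemma dbeta_0: "dbeta al 0 = 0"
  by (simp add: dbeta_def)

lemma chainW: assumes "dressing_chain N al v"
  shows "W v (Suc (Suc k)) (mu + al (Suc k)) x = mu + (v (Suc k) x)^2 + vd v (Suc k) x"
proof -
  have "vd v (Suc k) x + vd v (Suc (Suc k)) x = (v (Suc (Suc k)) x)^2 - (v (Suc k) x)^2 + al (Suc k)"
    using assms unfolding dressing_chain_def vd_def by blast
  then show ?thesis unfolding W_def by (simp add: algebra_simps)
qed

lemma vderiv: assumes "dressing_chain N al v"
  shows "(v n has_vector_derivative vd v n x) (at x)"
  using assms unfolding dressing_chain_def vd_def by (simp add: vector_derivative_works[symmetric])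

lemma comp:
  assumes chain: "dressing_chain N al v" and L: "(L has_vector_derivative L') (at x0)"
  shows "((\<lambda>x. poly (pa al v k x) (L x)) has_vector_derivative
      (poly (pc al v k x0) (L x0) - poly (pb al v k x0) (L x0) * W v 1 (L x0) x0
       + L' * poly (pderiv (pa al v k x0)) (L x0))) (at x0) \<and>
    ((\<lambda>x. poly (pb al v k x) (L x)) has_vector_derivative
      (poly (pd al v k x0) (L x0) - poly (pa al v k x0) (L x0)
       + L' * poly (pderiv (pb al v k x0)) (L x0))) (at x0) \<and>
    ((\<lambda>x. poly (pc al v k x) (L x)) has_vector_derivative
      (W v (Suc k) (L x0 + dbeta al k) x0 * poly (pa al v k x0) (L x0)
       - poly (pd al v k x0) (L x0) * W v 1 (L x0) x0
       + L' * poly (pderiv (pc al v k x0)) (L x0))) (at x0) \<and>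
    ((\<lambda>x. poly (pd al v k x) (L x)) has_vector_derivative
      (W v (Suc k) (L x0 + dbeta al k) x0 * poly (pb al v k x0) (L x0)
       - poly (pc al v k x0) (L x0)
       + L' * poly (pderiv (pd al v k x0)) (L x0))) (at x0)"
proof (induction k)
  case 0
  show ?case by (simp add: p0 dbeta_0)
next
  case (Suc k)
  let ?w = "v (Suc k)"
  let ?b = "dbeta al k"
  define a where "a = (\<lambda>x. poly (pa al v k x) (L x))"
  define b where "b = (\<lambda>x. poly (pb al v k x) (L x))"
  define c where "c = (\<lambda>x. poly (pc al v k x) (L x))"
  define d where "d = (\<lambda>x. poly (pd al v k x) (L x))"
  define a' where "a' = poly (pc al v k x0) (L x0) - poly (pb al v k x0) (L x0) * W v 1 (L x0) x0
       + L' * poly (pderiv (pa al v k x0)) (L x0)"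
  define b' where "b' = poly (pd al v k x0) (L x0) - poly (pa al v k x0) (L x0)
       + L' * poly (pderiv (pb al v k x0)) (L x0)"
  define c' where "c' = W v (Suc k) (L x0 + dbeta al k) x0 * poly (pa al v k x0) (L x0)
       - poly (pd al v k x0) (L x0) * W v 1 (L x0) x0
       + L' * poly (pderiv (pc al v k x0)) (L x0)"
  define d' where "d' = W v (Suc k) (L x0 + dbeta al k) x0 * poly (pb al v k x0) (L x0)
       - poly (pc al v k x0) (L x0)
       + L' * poly (pderiv (pd al v k x0)) (L x0)"
  have da: "(a has_vector_derivative a') (at x0)" and db: "(b has_vector_derivative b') (at x0)"
   and dc: "(c has_vector_derivative c') (at x0)" and dd: "(d has_vector_derivative d') (at x0)"
    using Suc.IH unfolding a_def b_def c_def d_def a'_def b'_def c'_def d'_def by auto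
  have dw: "(?w has_vector_derivative vd v (Suc k) x0) (at x0)" using vderiv[OF chain] .
  define m where "m = (\<lambda>x. ?b + ?w x * ?w x + L x)"
  have dm: "(m has_vector_derivative (?w x0 * vd v (Suc k) x0 + vd v (Suc k) x0 * ?w x0 + L')) (at x0)"
  proof -
    have "((\<lambda>x. ?b + ?w x * ?w x + L x) has_vector_derivative (0 + (?w x0 * vd v (Suc k) x0 + vd v (Suc k) x0 * ?w x0) + L')) (at x0)"
      by (intro has_vector_derivative_add has_vector_derivative_mult dw L has_vector_derivative_const)
    then show ?thesis by (simp add: m_def)
  qed
  have eA: "(\<lambda>x. poly (pa al v (Suc k) x) (L x)) = (\<lambda>x. ?w x * a x + c x)"
    by (simp add: pS a_def c_def)
  have eB: "(\<lambda>x. poly (pb al v (Suc k) x) (L x)) = (\<lambda>x. ?w x * b x + d x)"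
    by (simp add: pS b_def d_def)
  have eC: "(\<lambda>x. poly (pc al v (Suc k) x) (L x)) = (\<lambda>x. m x * a x + ?w x * c x)"
    by (simp add: pS a_def c_def m_def power2_eq_square algebra_simps)
  have eD: "(\<lambda>x. poly (pd al v (Suc k) x) (L x)) = (\<lambda>x. m x * b x + ?w x * d x)"
    by (simp add: pS b_def d_def m_def power2_eq_square algebra_simps)
  have W1: "W v (Suc (Suc k)) (L x0 + dbeta al (Suc k)) x0 = L x0 + ?b + (?w x0)^2 + vd v (Suc k) x0"
    using chainW[OF chain, of k "L x0 + ?b" x0] by (simp add: dbeta_Suc add.assoc)
  have W2: "W v (Suc k) (L x0 + dbeta al k) x0 = L x0 + ?b + (?w x0)^2 - vd v (Suc k) x0"
    by (simp add: W_def)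
  have A: "((\<lambda>x. ?w x * a x + c x) has_vector_derivative (?w x0 * a' + vd v (Suc k) x0 * a x0 + c')) (at x0)"
    by (intro has_vector_derivative_add has_vector_derivative_mult dw da dc)
  have B: "((\<lambda>x. ?w x * b x + d x) has_vector_derivative (?w x0 * b' + vd v (Suc k) x0 * b x0 + d')) (at x0)"
    by (intro has_vector_derivative_add has_vector_derivative_mult dw db dd)
  have C: "((\<lambda>x. m x * a x + ?w x * c x) has_vector_derivative
     (m x0 * a' + (?w x0 * vd v (Suc k) x0 + vd v (Suc k) x0 * ?w x0 + L') * a x0 + (?w x0 * c' + vd v (Suc k) x0 * c x0))) (at x0)"
    by (intro has_vector_derivative_add has_vector_derivative_mult dw da dc dm)
  have D: "((\<lambda>x. m x * b x + ?w x * d x) has_vector_derivative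
     (m x0 * b' + (?w x0 * vd v (Suc k) x0 + vd v (Suc k) x0 * ?w x0 + L') * b x0 + (?w x0 * d' + vd v (Suc k) x0 * d x0))) (at x0)"
    by (intro has_vector_derivative_add has_vector_derivative_mult dw db dd dm)
  show ?case
    unfolding eA eB eC eD
  proof (intro conjI)
    show "((\<lambda>x. ?w x * a x + c x) has_vector_derivative
      (poly (pc al v (Suc k) x0) (L x0) - poly (pb al v (Suc k) x0) (L x0) * W v 1 (L x0) x0
       + L' * poly (pderiv (pa al v (Suc k) x0)) (L x0))) (at x0)"
      using A by (rule has_vector_derivative_eq_rhs)
        (simp add: pS a_def b_def c_def d_def a'_def c'_def W2 pderiv_add pderiv_smult pderiv_mult pderiv_pCons algebra_simps power2_eq_square)
    show "((\<lambda>x. ?w x * b x + d x) has_vector_derivative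
      (poly (pd al v (Suc k) x0) (L x0) - poly (pa al v (Suc k) x0) (L x0)
       + L' * poly (pderiv (pb al v (Suc k) x0)) (L x0))) (at x0)"
      using B by (rule has_vector_derivative_eq_rhs)
        (simp add: pS a_def b_def c_def d_def b'_def d'_def W2 pderiv_add pderiv_smult pderiv_mult pderiv_pCons algebra_simps power2_eq_square)
    show "((\<lambda>x. m x * a x + ?w x * c x) has_vector_derivative
      (W v (Suc (Suc k)) (L x0 + dbeta al (Suc k)) x0 * poly (pa al v (Suc k) x0) (L x0)
       - poly (pd al v (Suc k) x0) (L x0) * W v 1 (L x0) x0
       + L' * poly (pderiv (pc al v (Suc k) x0)) (L x0))) (at x0)"
      using C by (rule has_vector_derivative_eq_rhs)
        (simp add: W1 pS m_def a_def b_def c_def d_def a'_def c'_def W2 pderiv_add pderiv_smult pderiv_mult pderiv_pCons algebra_simps power2_eq_square)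
    show "((\<lambda>x. m x * b x + ?w x * d x) has_vector_derivative
      (W v (Suc (Suc k)) (L x0 + dbeta al (Suc k)) x0 * poly (pb al v (Suc k) x0) (L x0)
       - poly (pc al v (Suc k) x0) (L x0)
       + L' * poly (pderiv (pd al v (Suc k) x0)) (L x0))) (at x0)"
      using D by (rule has_vector_derivative_eq_rhs)
        (simp add: W1 pS m_def a_def b_def c_def d_def b'_def d'_def W2 pderiv_add pderiv_smult pderiv_mult pderiv_pCons algebra_simps power2_eq_square)
  qed
qed


lemma simple_root:
  fixes p :: "complex poly"
  assumes Z: "{l. poly p l = 0} = f ` {1..g}" and inj: "inj_on f {1..g}"
    and deg: "degree p \<le> g" and j: "j \<in> {1..g}"
  shows "poly (pderiv p) (f j) \<noteq> 0"
proof
  assume pd0: "poly (pderiv p) (f j) = 0"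
  have p0: "p \<noteq> 0"
  proof
    assume "p = 0"
    then have "UNIV = f ` {1..g}" using Z by auto
    then have "finite (UNIV :: complex set)" by (metis finite_atLeastAtMost finite_imageI)
    then show False by (simp add: infinite_UNIV_char_0)
  qed
  have "poly p (f j) = 0" using Z j by auto
  then obtain q where pq: "p = [:- f j, 1:] * q" using poly_eq_0_iff_dvd by (metis dvdE)
  have q0: "q \<noteq> 0" using p0 pq by auto
  have "pderiv p = [:- f j, 1:] * pderiv q + q" unfolding pq pderiv_mult by (simp add: pderiv_pCons)
  then have qj: "poly q (f j) = 0" using pd0 by simp
  have sub: "f ` {1..g} \<subseteq> {l. poly q l = 0}"
  proof
    fix l assume "l \<in> f ` {1..g}"
    then have "poly p l = 0" using Z by auto
    then have "(l - f j) * poly q l = 0" using pq by auto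
    then have "l = f j \<or> poly q l = 0" by simp
    then show "l \<in> {l. poly q l = 0}" using qj by (cases "l = f j") auto
  qed
  have "g = card (f ` {1..g})" using inj by (simp add: card_image)
  also have "\<dots> \<le> card {l. poly q l = 0}" using sub poly_roots_finite[OF q0] by (rule card_mono[rotated])
  also have "\<dots> \<le> degree q" using card_poly_roots_bound[OF q0] .
  finally have "g \<le> degree q" .
  moreover have "degree p = degree q + 1" unfolding pq using q0 by (subst degree_mult_eq) auto
  ultimately show False using deg by simp
qed

lemma ent_poly:
  "Aent al v N l x = poly (pa al v N x) l" "Bent al v N l x = poly (pb al v N x) l"
  "Cent al v N l x = poly (pc al v N x) l" "Dent al v N l x = poly (pd al v N x) l"
  "Ptr al v N l x = poly (pa al v N x + pd al v N x) l"
  "Qdet al v N l x = poly (pa al v N x * pd al v N x - pb al v N x * pc al v N x) l"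
  by (simp_all add: Aent_def Bent_def Cent_def Dent_def Ptr_def Qdet_def Tmat_def Tpart_poly mat2_nth det_2)

lemma deriv_poly': "deriv (poly p) l = poly (pderiv p) l"
  by (rule DERIV_imp_deriv[OF poly_DERIV])

theorem mainTheorem1:
  fixes N g :: nat and \<alpha> :: "nat \<Rightarrow> complex" and v :: "nat \<Rightarrow> real \<Rightarrow> complex"
    and lam :: "nat \<Rightarrow> real \<Rightarrow> complex" and S :: "real set" and x0 :: real and j :: nat
  assumes N3: "N \<ge> 3"
    and g_def: "N = 2*g + 1 \<or> N = 2*g + 2"
    and chain: "dressing_chain N \<alpha> v"
    and S: "open S" "x0 \<in> S"
    and zeros: "\<forall>y\<in>S. {l. Bent \<alpha> v N l y = 0} = (\<lambda>i. lam i y) ` {1..g}"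
    and distinct: "\<forall>y\<in>S. inj_on (\<lambda>i. lam i y) {1..g}"
    and lam_diff: "\<forall>i\<in>{1..g}. lam i differentiable (at x0)"
    and z_nz: "\<forall>i\<in>{1..g}. Aent \<alpha> v N (lam i x0) x0 \<noteq> 0"
    and j: "j \<in> {1..g}"
  shows "(lam j has_vector_derivative
           ((Aent \<alpha> v N (lam j x0) x0
             - Qdet \<alpha> v N (lam j x0) x0 / Aent \<alpha> v N (lam j x0) x0)
            / deriv (\<lambda>l. Bent \<alpha> v N l x0) (lam j x0))) (at x0)
       \<and> ((\<lambda>y. Aent \<alpha> v N (lam j y) y) has_vector_derivative
           ((deriv (\<lambda>l. Ptr \<alpha> v N l x0) (lam j x0) * Aent \<alpha> v N (lam j x0) x0
             - deriv (\<lambda>l. Qdet \<alpha> v N l x0) (lam j x0))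
            / deriv (\<lambda>l. Bent \<alpha> v N l x0) (lam j x0))) (at x0)"
proof -
  define l0 where "l0 = lam j x0"
  define L' where "L' = vector_derivative (lam j) (at x0)"
  have L: "(lam j has_vector_derivative L') (at x0)"
    using lam_diff j unfolding L'_def by (simp add: vector_derivative_works[symmetric])
  define a where "a = poly (pa \<alpha> v N x0) l0"
  define b where "b = poly (pb \<alpha> v N x0) l0"
  define c where "c = poly (pc \<alpha> v N x0) l0"
  define d where "d = poly (pd \<alpha> v N x0) l0"
  define da where "da = poly (pderiv (pa \<alpha> v N x0)) l0"
  define db where "db = poly (pderiv (pb \<alpha> v N x0)) l0"
  define dc where "dc = poly (pderiv (pc \<alpha> v N x0)) l0"
  define dd where "dd = poly (pderiv (pd \<alpha> v N x0)) l0"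
  note cp = comp[OF chain L, of N]
  have dB: "((\<lambda>x. poly (pb \<alpha> v N x) (lam j x)) has_vector_derivative (d - a + L' * db)) (at x0)"
    using cp unfolding a_def d_def db_def l0_def by blast
  have dA: "((\<lambda>x. poly (pa \<alpha> v N x) (lam j x)) has_vector_derivative (c - b * W v 1 l0 x0 + L' * da)) (at x0)"
    using cp unfolding c_def b_def da_def l0_def by blast
  have B0: "\<And>y. y \<in> S \<Longrightarrow> poly (pb \<alpha> v N y) (lam j y) = 0"
  proof -
    fix y assume "y \<in> S"
    then have "lam j y \<in> {l. Bent \<alpha> v N l y = 0}" using zeros j by auto
    then show "poly (pb \<alpha> v N y) (lam j y) = 0" by (simp add: ent_poly)
  qed
  have "((\<lambda>x. 0) has_vector_derivative (d - a + L' * db)) (at x0)"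
    using has_vector_derivative_transform_within_open[OF dB S] B0 by auto
  then have eq1: "d - a + L' * db = 0"
    using vector_derivative_unique_at has_vector_derivative_const by blast
  have b0: "b = 0" using B0[OF S(2)] unfolding b_def l0_def .
  have degB: "degree (pb \<alpha> v N x0) \<le> g"
    using deg_bounds[of \<alpha> v N x0] g_def by auto
  have Zx0: "{l. poly (pb \<alpha> v N x0) l = 0} = (\<lambda>i. lam i x0) ` {1..g}"
    using zeros S(2) by (simp add: ent_poly)
  have db0: "db \<noteq> 0"
    using simple_root[OF Zx0 _ degB j] distinct S(2) unfolding db_def l0_def by auto
  have a0: "a \<noteq> 0" using z_nz j unfolding a_def l0_def by (simp add: ent_poly)
  have ePd: "(\<lambda>l. Ptr \<alpha> v N l x0) = poly (pa \<alpha> v N x0 + pd \<alpha> v N x0)"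
    by (rule ext) (simp add: ent_poly)
  have eQd: "(\<lambda>l. Qdet \<alpha> v N l x0) = poly (pa \<alpha> v N x0 * pd \<alpha> v N x0 - pb \<alpha> v N x0 * pc \<alpha> v N x0)"
    by (rule ext) (simp add: ent_poly)
  have eBd: "(\<lambda>l. Bent \<alpha> v N l x0) = poly (pb \<alpha> v N x0)"
    by (rule ext) (simp add: ent_poly)
  have eAf: "(\<lambda>y. Aent \<alpha> v N (lam j y) y) = (\<lambda>x. poly (pa \<alpha> v N x) (lam j x))"
    by (rule ext) (simp add: ent_poly)
  have eq1': "a = d + L' * db" using eq1 by (simp add: algebra_simps)
  have Lval: "L' = (a - d) / db" using eq1 db0 by (simp add: field_simps)
  show ?thesis
    unfolding ePd eQd eBd eAf deriv_poly' l0_def[symmetric]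
  proof
    show "(lam j has_vector_derivative
        (Aent \<alpha> v N l0 x0 - Qdet \<alpha> v N l0 x0 / Aent \<alpha> v N l0 x0) / poly (pderiv (pb \<alpha> v N x0)) l0) (at x0)"
      using L
    proof (rule has_vector_derivative_eq_rhs)
      have "Qdet \<alpha> v N l0 x0 = a * d" by (simp add: ent_poly a_def d_def b_def[symmetric] b0)
      then show "L' = (Aent \<alpha> v N l0 x0 - Qdet \<alpha> v N l0 x0 / Aent \<alpha> v N l0 x0) / poly (pderiv (pb \<alpha> v N x0)) l0"
        using a0 by (simp add: Lval ent_poly a_def[symmetric] db_def[symmetric])
    qed
    show "((\<lambda>x. poly (pa \<alpha> v N x) (lam j x)) has_vector_derivative
        (poly (pderiv (pa \<alpha> v N x0 + pd \<alpha> v N x0)) l0 * Aent \<alpha> v N l0 x0 -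
         poly (pderiv (pa \<alpha> v N x0 * pd \<alpha> v N x0 - pb \<alpha> v N x0 * pc \<alpha> v N x0)) l0) /
        poly (pderiv (pb \<alpha> v N x0)) l0) (at x0)"
      using dA
    proof (rule has_vector_derivative_eq_rhs)
      show "c - b * W v 1 l0 x0 + L' * da =
        (poly (pderiv (pa \<alpha> v N x0 + pd \<alpha> v N x0)) l0 * Aent \<alpha> v N l0 x0 -
         poly (pderiv (pa \<alpha> v N x0 * pd \<alpha> v N x0 - pb \<alpha> v N x0 * pc \<alpha> v N x0)) l0) /
        poly (pderiv (pb \<alpha> v N x0)) l0"
        using db0 eq1'
        by (simp add: b0 pderiv_add pderiv_diff pderiv_mult ent_poly a_def[symmetric] b_def[symmetric]
           c_def[symmetric] d_def[symmetric] da_def[symmetric] db_def[symmetric] dc_def[symmetric] dd_def[symmetric]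
           field_simps)
    qed
  qed
qed

end
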